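(* Let $n \in \mathbb{Z}_{\geqslant 2}$, $k \in \mathbb{Z}_{\geqslant 1}$ and let $q \geqslant 3$ be a prime number. Then $$v_q\left(\sigma_k(n)\right) = \sum_{\substack{p^{\alpha} \| n \\ p^{k} \equiv 1 \pmod q}} v_q(\alpha+1) \;+\; \sum_{\substack{p^{\alpha} \| n \\ p \ne q \\ p^k \not\equiv 1 \pmod q \\ \varpi_k \mid \alpha + 1}} \Bigl( v_q(\alpha+1) + v_q(k) + v_q\left(\Phi_{\varpi_1}(p)\right) \Bigr),$$ where both sums run over primes $p$ dividing $n$ (with $\alpha = v_p(n)$), $\varpi_1 := \operatorname{ord}_q(p)$ and $\varpi_k := \operatorname{ord}_q(p^k)$.
   Context: $\sigma_k(n) := \sum_{d \mid n} d^k$. $v_q$ denotes the $q$-adic valuation. For a prime $p$, $p^{\alpha} \| n$ means $p^\alpha \mid n$ and $p^{\alpha+1} \nmid n$, i.e. $\alpha = v_p(n)$. $\operatorname{ord}_q(a)$ is the multiplicative order of $a$ modulo $q$ (for $q \nmid a$). $\Phi_m(X)$ denotes the $m$th cyclotomic polynomial. *)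

theory Defs
  imports "HOL-Number_Theory.Number_Theory" "HOL-Computational_Algebra.Computational_Algebra"
begin

definition sigma :: "nat \<Rightarrow> nat \<Rightarrow> nat" where
  "sigma k n = (\<Sum>d | d dvd n. d ^ k)"

definition cyclotomic :: "nat \<Rightarrow> complex poly" where
  "cyclotomic m = (\<Prod>j\<in>{j. 1 \<le> j \<and> j \<le> m \<and> coprime j m}.
                     [:- cis (2 * pi * real j / real m), 1:])"

definition cyclotomic_val :: "nat \<Rightarrow> int \<Rightarrow> int" where
  "cyclotomic_val m x = (THE z::int. poly (cyclotomic m) (of_int x) = of_int z)"

end

theory Submission
  imports Defs
begin

lemma gcd_aux:
  fixes a b x y :: nat assumes cop: "coprime a b" and xy: "x dvd a" "y dvd b"
  shows "gcd (x*y) a = x" "gcd (x*y) b = y"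
proof -
  have "coprime a y" using cop xy by (meson coprime_divisors dvd_refl)
  have "coprime b x" using cop xy by (meson coprime_commute coprime_divisors dvd_refl)
  show "gcd (x*y) a = x" using gcd_mult_left_right_cancel[OF \<open>coprime a y\<close>, of x] xy
    by (simp add: gcd_nat.absorb1)
  show "gcd (x*y) b = y" using gcd_mult_left_left_cancel[OF \<open>coprime b x\<close>, of y] xy
    by (simp add: gcd_nat.absorb1)
qed

lemma sigma_mult:
  fixes a b :: nat assumes cop: "coprime a b" and "a > 0" "b > 0"
  shows "sigma k (a*b) = sigma k a * sigma k b"
proof -
  have "sigma k a * sigma k b = (\<Sum>(x,y)\<in>{d. d dvd a} \<times> {d. d dvd b}. (x*y)^k)"
    unfolding sigma_def sum_product sum.cartesian_product by (simp add: power_mult_distrib)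
  also have "\<dots> = sigma k (a*b)" unfolding sigma_def
  proof (rule sum.reindex_bij_witness[where i="\<lambda>d. (gcd d a, gcd d b)" and j="\<lambda>(x,y). x*y"])
    fix xy assume "xy \<in> {d. d dvd a} \<times> {d. d dvd b}"
    then obtain x y where xy: "xy = (x,y)" "x dvd a" "y dvd b" by auto
    show "(gcd (case xy of (x, y) \<Rightarrow> x * y) a, gcd (case xy of (x, y) \<Rightarrow> x * y) b) = xy"
      using xy gcd_aux[OF cop xy(2,3)] by simp
    show "(case xy of (x, y) \<Rightarrow> x * y) \<in> {d. d dvd a * b}" using xy by (simp add: mult_dvd_mono)
    show "(case xy of (x, y) \<Rightarrow> x * y) ^ k = (case xy of (x, y) \<Rightarrow> (x * y) ^ k)" using xy by simp
  next
    fix d assume "d \<in> {d. d dvd a * b}"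
    then have d: "d dvd a * b" by simp
    then obtain x y where "d = x * y" "x dvd a" "y dvd b" using division_decomp by blast
    then show "(case (gcd d a, gcd d b) of (x, y) \<Rightarrow> x * y) = d"
      using gcd_aux[OF cop] by simp
    show "(gcd d a, gcd d b) \<in> {d. d dvd a} \<times> {d. d dvd b}" by simp
  qed
  finally show ?thesis ..
qed

lemma sigma_prime_power:
  fixes p :: nat assumes p: "prime p"
  shows "sigma k (p^e) = (\<Sum>i<Suc e. (p^k)^i)"
proof -
  have "{d. d dvd p^e} = (\<lambda>i. p^i) ` {..<Suc e}"
    using divides_primepow_nat[OF p] by (auto simp: less_Suc_eq_le)
  moreover have "inj_on (\<lambda>i. p^i) {..<Suc e}"
    using p prime_gt_1_nat by (auto simp: inj_on_def power_inject_exp)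
  ultimately show ?thesis unfolding sigma_def
    by (simp add: sum.reindex power_mult[symmetric] mult.commute)
qed

lemma sigma_prod:
  fixes P :: "nat set"
  assumes "finite P" "\<forall>p\<in>P. prime p"
  shows "sigma k (\<Prod>p\<in>P. p^(e p)) = (\<Prod>p\<in>P. sigma k (p^(e p)))"
  using assms
proof (induction P rule: finite_induct)
  case empty
  then show ?case by (simp add: sigma_def)
next
  case (insert p F)
  have cop: "coprime (p^(e p)) (\<Prod>p\<in>F. p^(e p))"
  proof (intro prod_coprime_right)
    fix q assume "q \<in> F"
    then have "coprime p q" using insert by (intro primes_coprime) auto
    then show "coprime (p ^ e p) (q ^ e q)" by simp
  qed
  have pos1: "p^(e p) > 0" using insert prime_gt_0_nat by auto
  have pos2: "(\<Prod>p\<in>F. p^(e p)) > 0" using insert prime_gt_0_nat by (intro prod_pos) auto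
  show ?case using insert sigma_mult[OF cop pos1 pos2] by simp
qed

lemma sigma_factor:
  fixes n :: nat assumes "n > 0"
  shows "sigma k n = (\<Prod>p\<in>prime_factors n. sigma k (p^(multiplicity p n)))"
  using sigma_prod[of "prime_factors n" k "\<lambda>p. multiplicity p n"] prime_factorization_nat[OF assms]
  by auto


lemma nat_pow_diff_1:
  fixes a :: nat assumes "a \<ge> 1"
  shows "a^m - 1 = (a - 1) * (\<Sum>i<m. a^i)"
proof -
  have "a^m \<ge> 1" using assms by simp
  then have "int (a^m - 1) = int a ^ m - 1" by (simp add: of_nat_diff)
  also have "\<dots> = (int a - 1) * (\<Sum>i<m. int a ^ i)" by (rule power_diff_1_eq)
  also have "\<dots> = int ((a - 1) * (\<Sum>i<m. a^i))" using assms by (simp add: of_nat_diff)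
  finally show ?thesis by (simp only: of_nat_eq_iff)
qed

lemma sum_lessThan_int_twice: "(\<Sum>i<n. int i) * 2 = int n * (int n - 1)"
  by (induction n) (auto simp: algebra_simps)


lemma lte_step:
  fixes a q :: nat assumes q: "prime q" "odd q" and a: "a > 1" "[a = 1] (mod q)"
  shows "multiplicity q (a^q - 1) = multiplicity q (a - 1) + 1"
proof -
  define S where "S = (\<Sum>i<q. a^i)"
  have eq: "a^q - 1 = (a - 1) * S" unfolding S_def using a by (intro nat_pow_diff_1) auto
  have "q dvd a - 1" using a cong_altdef_nat[of 1 a q] by (simp add: cong_sym_eq)
  then obtain t where t: "a - 1 = q * t" by blast
  define c where "c = int q * int t"
  have c: "int a = 1 + c" using t a unfolding c_def by (metis add.commute le_add_diff_inverse less_imp_le of_nat_1 of_nat_add of_nat_mult)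
  have key: "(int q)^2 dvd (int a ^ i - 1 - int i * c)" for i
  proof (induction i)
    case 0 then show ?case by simp
  next
    case (Suc i)
    have "int a ^ Suc i - 1 - int (Suc i) * c = (1 + c) * (int a ^ i - 1 - int i * c) + int i * c^2"
      by (simp add: c algebra_simps power2_eq_square)
    moreover have "(int q)^2 dvd c^2" unfolding c_def by (simp add: power_mult_distrib)
    ultimately show ?case using Suc by (simp add: dvd_add dvd_mult)
  qed
  obtain s where s: "q = 2 * s + 1" using q(2) by (metis oddE)
  have sumi: "(\<Sum>i<q. int i) = int q * int s"
    using sum_lessThan_int_twice[of q] s by (simp add: algebra_simps)
  have "int S - int q = (\<Sum>i<q. (int a ^ i - 1 - int i * c)) + c * (\<Sum>i<q. int i)"
    by (simp add: S_def sum_subtractf sum_distrib_left sum.distrib algebra_simps)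
  also have "(int q)^2 dvd \<dots>"
    using key sumi by (intro dvd_add dvd_sum) (auto simp: c_def power2_eq_square)
  finally have d: "(int q)^2 dvd int S - int q" .
  have qS: "q dvd S"
  proof -
    have "int q dvd int S - int q" using d by (rule dvd_trans[rotated]) (simp add: power2_eq_square)
    moreover have "int S = (int S - int q) + int q" by simp
    ultimately have "int q dvd int S" by (metis dvd_add dvd_refl)
    then show ?thesis by simp
  qed
  have nqS: "\<not> q^2 dvd S"
  proof
    assume "q^2 dvd S"
    then have "(int q)^2 dvd int S" by (metis of_nat_dvd_iff of_nat_power)
    then have "(int q)^2 dvd int S - (int S - int q)" using d by (rule dvd_diff)
    then have "int (q^2) dvd int q" by simp
    then have "q^2 dvd q" by (simp only: of_nat_dvd_iff)
    then have "q * q dvd q" by (simp add: power2_eq_square)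
    then have "q * q \<le> q" using prime_gt_0_nat[OF q(1)] by (rule dvd_imp_le)
    moreover have "2 * q \<le> q * q" using prime_ge_2_nat[OF q(1)] by (rule mult_le_mono1)
    ultimately show False using prime_gt_0_nat[OF q(1)] by linarith
  qed
  have mS: "multiplicity q S = 1" using qS nqS by (intro multiplicity_eqI) (auto simp: power2_eq_square)
  have "S \<noteq> 0" using nqS by (metis dvd_0_right)
  then show ?thesis using eq mS a q by (simp add: prime_elem_multiplicity_mult_distrib)
qed


lemma lte_coprime:
  fixes a q m :: nat assumes q: "prime q" and a: "a > 1" "[a = 1] (mod q)" and m: "\<not> q dvd m"
  shows "multiplicity q (a^m - 1) = multiplicity q (a - 1)"
proof -
  define S where "S = (\<Sum>i<m. a^i)"
  have eq: "a^m - 1 = (a - 1) * S" unfolding S_def using a by (intro nat_pow_diff_1) auto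
  have "[S = (\<Sum>i<m. 1)] (mod q)" unfolding S_def using a by (intro cong_sum) (metis cong_pow power_one)
  then have "[S = m] (mod q)" by simp
  then have "\<not> q dvd S" using m by (simp add: cong_dvd_iff)
  then have "multiplicity q S = 0" by (rule not_dvd_imp_multiplicity_0)
  moreover have "S \<noteq> 0" using \<open>\<not> q dvd S\<close> by (metis dvd_0_right)
  ultimately show ?thesis using eq a q by (simp add: prime_elem_multiplicity_mult_distrib)
qed

lemma lte:
  fixes a q m :: nat assumes q: "prime q" "odd q" and a: "a > 1" "[a = 1] (mod q)" and m: "m > 0"
  shows "multiplicity q (a^m - 1) = multiplicity q (a - 1) + multiplicity q m"
  using m
proof (induction m rule: less_induct)
  case (less m)
  show ?case
  proof (cases "q dvd m")
    case False
    then show ?thesis using lte_coprime[OF q(1) a False] by (simp add: not_dvd_imp_multiplicity_0)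
  next
    case True
    then obtain m' where m': "m = q * m'" by blast
    have "m' > 0" using m' less by auto
    have "m' < m" using m' \<open>m' > 0\<close> prime_gt_1_nat[OF q(1)] by simp
    have a1: "a^m' > 1" using a(1) \<open>m' > 0\<close> by (metis one_less_power)
    have a2: "[a^m' = 1] (mod q)" using a by (metis cong_pow power_one)
    have "a^m - 1 = (a^m')^q - 1" by (simp add: m' power_mult mult.commute)
    then have "multiplicity q (a^m - 1) = multiplicity q (a^m' - 1) + 1"
      using lte_step[OF q a1 a2] by simp
    also have "\<dots> = multiplicity q (a - 1) + multiplicity q m' + 1"
      using less.IH[OF \<open>m' < m\<close> \<open>m' > 0\<close>] by simp
    moreover have "multiplicity q m = Suc (multiplicity q m')"
      using m' q \<open>m' > 0\<close> multiplicity_times_same[of m' q] prime_gt_1_nat[OF q(1)] by simp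
    ultimately show ?thesis by simp
  qed
qed


definition om :: "nat \<Rightarrow> complex" where "om d = cis (2 * pi / real d)"

lemma om_pow_real: "d > 0 \<Longrightarrow> om d ^ k = cis (2 * pi * real k / real d)"
  by (simp add: om_def DeMoivre mult_ac)

lemma om_pow_d: "d > 0 \<Longrightarrow> om d ^ d = 1"
  by (simp add: om_pow_real)

lemma om_pow_mod: "d > 0 \<Longrightarrow> om d ^ k = om d ^ (k mod d)"
proof -
  assume d: "d > 0"
  have "om d ^ k = om d ^ (d * (k div d) + k mod d)" by (metis div_mult_mod_eq mult.commute)
  also have "\<dots> = (om d ^ d) ^ (k div d) * om d ^ (k mod d)" by (simp only: power_add power_mult)
  finally show ?thesis using om_pow_d[OF d] by simp
qed

lemma om_inj: assumes "d > 0" shows "om d ^ a = om d ^ b \<longleftrightarrow> a mod d = b mod d"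
proof
  assume "om d ^ a = om d ^ b"
  then have "om d ^ (a mod d) = om d ^ (b mod d)" using om_pow_mod[OF assms] by metis
  then have "cis (2 * pi * real (a mod d) / real d) = cis (2 * pi * real (b mod d) / real d)"
    using om_pow_real[OF assms] by metis
  moreover have "a mod d \<in> {..<d}" "b mod d \<in> {..<d}" using assms by auto
  ultimately show "a mod d = b mod d"
    using bij_betw_roots_unity[OF assms] unfolding bij_betw_def inj_on_def by blast
next
  assume "a mod d = b mod d"
  then show "om d ^ a = om d ^ b" using om_pow_mod[OF assms] by metis
qed

lemma om_pow_eq_1: assumes "d > 0" shows "om d ^ a = 1 \<longleftrightarrow> d dvd a"
  using om_inj[OF assms, of a 0] by (simp add: mod_eq_0_iff_dvd)

lemma roots_unity_om: assumes "d > 0" "z ^ d = 1" shows "\<exists>k<d. z = om d ^ k"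
proof -
  have "z \<in> (\<lambda>k. cis (2 * pi * real k / real d)) ` {..<d}"
    using bij_betw_roots_unity[OF assms(1)] assms(2) unfolding bij_betw_def by auto
  then show ?thesis using om_pow_real[OF assms(1)] by auto
qed

definition Prim :: "nat \<Rightarrow> complex set" where
  "Prim d = {z. z ^ d = 1 \<and> (\<forall>e. 0 < e \<and> e < d \<longrightarrow> z ^ e \<noteq> 1)}"

lemma cyclotomic_Prim:
  assumes d: "d > 0"
  shows "cyclotomic d = (\<Prod>z\<in>Prim d. [:-z, 1:])"
proof -
  define J where "J = {j. 1 \<le> j \<and> j \<le> d \<and> coprime j d}"
  have cj: "cis (2 * pi * real j / real d) = om d ^ j" for j using om_pow_real[OF d] by simp
  have "cyclotomic d = (\<Prod>j\<in>J. [:- (om d ^ j), 1:])"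
    unfolding cyclotomic_def J_def cj by simp
  also have "\<dots> = (\<Prod>z\<in>Prim d. [:-z, 1:])"
  proof (rule prod.reindex_bij_betw)
    show "bij_betw (\<lambda>j. om d ^ j) J (Prim d)" unfolding bij_betw_def
    proof (intro conjI)
      show "inj_on (\<lambda>j. om d ^ j) J"
      proof (rule inj_onI)
        fix a b assume ab: "a \<in> J" "b \<in> J" "om d ^ a = om d ^ b"
        then have m: "a mod d = b mod d" using om_inj[OF d] by simp
        have "a mod d = (if a = d then 0 else a)" "b mod d = (if b = d then 0 else b)"
          using ab unfolding J_def by auto
        then show "a = b" using m ab(1,2) unfolding J_def by (auto split: if_splits)
      qed
      show "(\<lambda>j. om d ^ j) ` J = Prim d"
      proof
        show "(\<lambda>j. om d ^ j) ` J \<subseteq> Prim d"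
        proof
          fix z assume "z \<in> (\<lambda>j. om d ^ j) ` J"
          then obtain j where j: "j \<in> J" "z = om d ^ j" by blast
          have "z ^ d = 1" using j om_pow_d[OF d] by (simp add: power_mult[symmetric] mult.commute power_mult)
          moreover have "z ^ e \<noteq> 1" if "0 < e" "e < d" for e
          proof
            assume "z ^ e = 1"
            then have "d dvd j * e" using j om_pow_eq_1[OF d] by (metis power_mult)
            then have "d dvd e" using j unfolding J_def
              by (metis coprime_commute coprime_dvd_mult_right_iff mem_Collect_eq)
            then show False using that by (simp add: nat_dvd_not_less)
          qed
          ultimately show "z \<in> Prim d" unfolding Prim_def by auto
        qed
      next
        show "Prim d \<subseteq> (\<lambda>j. om d ^ j) ` J"
        proof
          fix z assume z: "z \<in> Prim d"
          then obtain k where k: "k < d" "z = om d ^ k" using roots_unity_om[OF d] unfolding Prim_def by auto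
          show "z \<in> (\<lambda>j. om d ^ j) ` J"
          proof (cases "k = 0")
            case True
            then have "z = 1" using k by simp
            then have "d = 1" using z unfolding Prim_def
              by (metis (mono_tags, lifting) d less_one linorder_neqE_nat mem_Collect_eq power_one_right)
            then show ?thesis using True k unfolding J_def by (auto intro!: image_eqI[where x=1] simp: om_def)
          next
            case False
            define g where "g = gcd k d"
            have g: "g > 0" "g dvd k" "g dvd d" using False unfolding g_def by auto
            have "coprime k d"
            proof (rule ccontr)
              assume "\<not> coprime k d"
              then have "g \<noteq> 1" unfolding g_def using coprime_iff_gcd_eq_1 by blast
              then have g1: "g > 1" using g by simp
              define e where "e = d div g"
              have "e > 0" "e < d" using g g1 d unfolding e_def
                by (auto simp: dvd_div_eq_0_iff intro: div_less_dividend)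
              have "z ^ e = om d ^ (k * e)" using k by (simp add: power_mult)
              also have "k * e = d * (k div g)" using g unfolding e_def
                by (metis div_mult_swap dvd_div_mult mult.commute)
              also have "om d ^ (d * (k div g)) = 1" using om_pow_d[OF d] by (simp add: power_mult)
              finally show False using z \<open>e > 0\<close> \<open>e < d\<close> unfolding Prim_def by auto
            qed
            then show ?thesis using k False unfolding J_def by auto
          qed
        qed
      qed
    qed
  qed
  finally show ?thesis .
qed


lemma Prim_sub: "Prim d \<subseteq> {z. z ^ d = 1}" unfolding Prim_def by auto

lemma finite_Prim: "d > 0 \<Longrightarrow> finite (Prim d)"
  by (rule finite_subset[OF Prim_sub]) (simp add: finite_roots_unity)

lemma Prim_disjoint:
  assumes "d1 \<noteq> d2" "d1 > 0" "d2 > 0" shows "Prim d1 \<inter> Prim d2 = {}"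
proof -
  have aux: "False" if "z \<in> Prim a" "z \<in> Prim b" "0 < a" "a < b" for z a b
    using that unfolding Prim_def by auto
  show ?thesis
  proof (rule ccontr)
    assume "Prim d1 \<inter> Prim d2 \<noteq> {}"
    then obtain z where z: "z \<in> Prim d1" "z \<in> Prim d2" by blast
    show False
    proof (cases "d1 < d2")
      case True then show False using z assms aux by blast
    next
      case False then have "d2 < d1" using assms by simp
      then show False using z assms aux by blast
    qed
  qed
qed


lemma roots_union:
  assumes m: "m > 0"
  shows "{z::complex. z ^ m = 1} = (\<Union>d\<in>{d. d dvd m}. Prim d)"
proof
  show "(\<Union>d\<in>{d. d dvd m}. Prim d) \<subseteq> {z. z ^ m = 1}"
  proof
    fix z assume "z \<in> (\<Union>d\<in>{d. d dvd m}. Prim d)"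
    then obtain d where "d dvd m" "z ^ d = 1" unfolding Prim_def by auto
    then obtain s where "m = d * s" "z ^ d = 1" by (auto elim: dvdE)
    then show "z \<in> {z. z ^ m = 1}" by (simp add: power_mult)
  qed
next
  show "{z. z ^ m = 1} \<subseteq> (\<Union>d\<in>{d. d dvd m}. Prim d)"
  proof
    fix z :: complex assume z: "z \<in> {z. z ^ m = 1}"
    define d where "d = (LEAST e. 0 < e \<and> z ^ e = 1)"
    have ex: "0 < m \<and> z ^ m = 1" using z m by simp
    have d1: "0 < d \<and> z ^ d = 1" unfolding d_def by (rule LeastI[of _ m]) (use ex in auto)
    have d2: "z ^ e \<noteq> 1" if "0 < e" "e < d" for e
      using not_less_Least[of e "\<lambda>e. 0 < e \<and> z ^ e = 1"] that unfolding d_def by auto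
    have "d dvd m"
    proof (rule ccontr)
      assume "\<not> d dvd m"
      then have r: "m mod d > 0" "m mod d < d" using d1 by (auto simp: dvd_eq_mod_eq_0)
      have "z ^ m = (z ^ d) ^ (m div d) * z ^ (m mod d)"
        by (simp only: power_mult[symmetric] power_add[symmetric] mult_div_mod_eq)
      then have "z ^ (m mod d) = 1" using d1 ex by simp
      then show False using d2 r by blast
    qed
    moreover have "z \<in> Prim d" using d1 d2 unfolding Prim_def by auto
    ultimately show "z \<in> (\<Union>d\<in>{d. d dvd m}. Prim d)" by auto
  qed
qed


lemma xm1_prod:
  assumes m: "m > 0"
  shows "(monom 1 m - 1 :: complex poly) = (\<Prod>z\<in>{z. z ^ m = 1}. [:-z, 1:])"
proof -
  define p :: "complex poly" where "p = monom 1 m - 1"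
  have pz: "poly p z = z ^ m - 1" for z by (simp add: p_def poly_monom)
  have lc: "lead_coeff p = 1"
  proof -
    have "p = - 1 + monom 1 m" unfolding p_def by simp
    moreover have "degree (- 1 :: complex poly) < degree (monom (1::complex) m)"
      using m by (simp add: degree_monom_eq)
    ultimately have "lead_coeff p = lead_coeff (monom (1::complex) m)" by (metis lead_coeff_add_le)
    then show ?thesis by (simp add: degree_monom_eq)
  qed
  have pd: "pderiv p = monom (of_nat m) (m - 1)" unfolding p_def by (simp add: pderiv_monom pderiv_diff)
  have "rsquarefree p" unfolding rsquarefree_roots
  proof (intro allI notI)
    fix a assume "poly p a = 0 \<and> poly (pderiv p) a = 0"
    then have "a ^ m = 1" "of_nat m * a ^ (m - 1) = 0" using pz pd by (auto simp: poly_monom)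
    then have "a \<noteq> 0" using m by (metis power_0_left zero_neq_one not_gr0)
    then have "of_nat m * a ^ (m - 1) \<noteq> 0" using m by simp
    then show False using \<open>of_nat m * a ^ (m - 1) = 0\<close> by contradiction
  qed
  then have "smult (lead_coeff p) (\<Prod>z|poly p z = 0. [:-z, 1:]) = p"
    by (rule complex_poly_decompose_rsquarefree)
  then show ?thesis using lc pz by (simp add: p_def)
qed

lemma xm1_cyclo:
  assumes m: "m > 0"
  shows "(monom 1 m - 1 :: complex poly) = (\<Prod>d\<in>{d. d dvd m}. cyclotomic d)"
proof -
  have pos: "d > 0" if "d \<in> {d. d dvd m}" for d using that m by (auto intro: Nat.gr0I)
  have "(monom 1 m - 1 :: complex poly) = (\<Prod>z\<in>(\<Union>d\<in>{d. d dvd m}. Prim d). [:-z, 1:])"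
    using xm1_prod[OF m] roots_union[OF m] by simp
  also have "\<dots> = (\<Prod>d\<in>{d. d dvd m}. \<Prod>z\<in>Prim d. [:-z, 1:])"
    by (rule prod.UNION_disjoint) (use m pos finite_Prim Prim_disjoint in auto)
  also have "\<dots> = (\<Prod>d\<in>{d. d dvd m}. cyclotomic d)"
    using cyclotomic_Prim pos by (intro prod.cong) auto
  finally show ?thesis .
qed


definition ip :: "int poly \<Rightarrow> complex poly" where "ip p = map_poly of_int p"

lemma coeff_ip [simp]: "coeff (ip p) n = of_int (coeff p n)"
  by (simp add: ip_def coeff_map_poly)

lemma ip_eq_iff [simp]: "ip p = ip q \<longleftrightarrow> p = q"
  by (auto simp: poly_eq_iff)

lemma ip_0 [simp]: "ip 0 = 0" by (simp add: poly_eq_iff)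
lemma ip_1 [simp]: "ip 1 = 1" by (simp add: poly_eq_iff coeff_1)
lemma ip_eq_0_iff [simp]: "ip p = 0 \<longleftrightarrow> p = 0" using ip_eq_iff[of p 0] by (simp del: ip_eq_iff)
lemma ip_add [simp]: "ip (p + q) = ip p + ip q" by (simp add: poly_eq_iff)
lemma ip_diff [simp]: "ip (p - q) = ip p - ip q" by (simp add: poly_eq_iff)
lemma ip_mult [simp]: "ip (p * q) = ip p * ip q" by (simp add: poly_eq_iff coeff_mult)
lemma ip_monom [simp]: "ip (monom c n) = monom (of_int c) n" by (simp add: poly_eq_iff coeff_monom)
lemma ip_prod: "ip (\<Prod>x\<in>A. f x) = (\<Prod>x\<in>A. ip (f x))"
  by (induction A rule: infinite_finite_induct) auto
lemma degree_ip [simp]: "degree (ip p) = degree p"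
  by (simp add: ip_def degree_map_poly)
lemma lead_coeff_ip: "lead_coeff (ip p) = of_int (lead_coeff p)" by simp
lemma poly_ip: "poly (ip p) (of_int x) = of_int (poly p x)"
  by (induction p) (auto simp: ip_def map_poly_pCons)

lemma lead_coeff_cyclotomic: "lead_coeff (cyclotomic d) = 1"
  unfolding cyclotomic_def by (simp add: lead_coeff_prod)

lemma cyclotomic_int: "m > 0 \<Longrightarrow> \<exists>Q. cyclotomic m = ip Q"
proof (induction m rule: less_induct)
  case (less m)
  define D where "D = {d. d dvd m} - {m}"
  have Dprop: "d < m \<and> d > 0" if "d \<in> D" for d
    using that less.prems unfolding D_def by (auto intro: Nat.gr0I dest: dvd_imp_le)
  have "\<forall>d\<in>D. \<exists>Q. cyclotomic d = ip Q" using less.IH Dprop by blast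
  then obtain Qf where Qf: "\<forall>d\<in>D. cyclotomic d = ip (Qf d)" by metis
  define R where "R = (\<Prod>d\<in>D. cyclotomic d)"
  define Ri where "Ri = (\<Prod>d\<in>D. Qf d)"
  have RRi: "R = ip Ri" unfolding R_def Ri_def ip_prod using Qf by (intro prod.cong) auto
  have fin: "finite {d. d dvd m}" using less.prems by simp
  have eq: "(monom 1 m - 1 :: complex poly) = cyclotomic m * R"
    unfolding xm1_cyclo[OF less.prems] R_def D_def using fin by (subst prod.remove[of _ m]) auto
  have lR: "lead_coeff R = 1" unfolding R_def by (simp add: lead_coeff_prod lead_coeff_cyclotomic)
  then have lRi: "lead_coeff Ri = 1" using RRi lead_coeff_ip by (metis of_int_eq_1_iff)
  then have "Ri \<noteq> 0" by auto
  obtain Qm r where pd: "pseudo_divmod (monom 1 m - 1) Ri = (Qm, r)" by (metis surj_pair)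
  from pseudo_divmod[OF \<open>Ri \<noteq> 0\<close> pd] lRi
  have e1: "monom 1 m - 1 = Ri * Qm + r" and e2: "r = 0 \<or> degree r < degree Ri" by auto
  have "ip (monom 1 m - 1) = R * ip Qm + ip r" using e1 RRi by simp
  then have "R * (cyclotomic m - ip Qm) = ip r" using eq by (simp add: algebra_simps)
  show ?case
  proof (rule ccontr)
    assume "\<nexists>Q. cyclotomic m = ip Q"
    then have ne: "cyclotomic m - ip Qm \<noteq> 0" by auto
    have "R \<noteq> 0" using lR by auto
    then have "degree (R * (cyclotomic m - ip Qm)) = degree R + degree (cyclotomic m - ip Qm)"
      using ne by (rule degree_mult_eq)
    moreover have "R * (cyclotomic m - ip Qm) \<noteq> 0" using ne \<open>R \<noteq> 0\<close> by simp
    ultimately have "degree (ip r) \<ge> degree Ri" "r \<noteq> 0"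
      using \<open>R * (cyclotomic m - ip Qm) = ip r\<close> RRi by auto
    then show False using e2 by simp
  qed
qed

lemma cyclotomic_val_eq:
  assumes "m > 0" shows "of_int (cyclotomic_val m x) = poly (cyclotomic m) (of_int x)"
proof -
  obtain Q where Q: "cyclotomic m = ip Q" using cyclotomic_int[OF assms] by blast
  have "cyclotomic_val m x = poly Q x"
    unfolding cyclotomic_val_def Q poly_ip by (rule the_equality) auto
  then show ?thesis using Q poly_ip by simp
qed

lemma xm1_int:
  assumes m: "m > 0"
  shows "x ^ m - 1 = (\<Prod>d\<in>{d. d dvd m}. cyclotomic_val d x)"
proof -
  have "(of_int (x ^ m - 1) :: complex) = poly (monom 1 m - 1) (of_int x)"
    by (simp add: poly_monom)
  also have "\<dots> = (\<Prod>d\<in>{d. d dvd m}. poly (cyclotomic d) (of_int x))"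
    by (simp add: xm1_cyclo[OF m] poly_prod)
  also have "\<dots> = (\<Prod>d\<in>{d. d dvd m}. of_int (cyclotomic_val d x))"
    using m by (intro prod.cong refl) (auto simp: cyclotomic_val_eq intro: Nat.gr0I)
  also have "\<dots> = of_int (\<Prod>d\<in>{d. d dvd m}. cyclotomic_val d x)" by simp
  finally show ?thesis by (simp only: of_int_eq_iff)
qed


lemma mult_int_nat:
  fixes q x :: nat assumes q: "prime q"
  shows "multiplicity (int q) (int x) = multiplicity q x"
proof (cases "x = 0")
  case True then show ?thesis by simp
next
  case False
  have iff: "int q ^ n dvd int x \<longleftrightarrow> q ^ n dvd x" for n
    by (metis of_nat_dvd_iff of_nat_power)
  have u1: "\<not> is_unit q" using prime_gt_1_nat[OF q] by simp
  have u2: "\<not> is_unit (int q)" using prime_gt_1_nat[OF q] by simp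
  have x2: "int x \<noteq> 0" using False by simp
  have h: "n \<le> multiplicity (int q) (int x) \<longleftrightarrow> n \<le> multiplicity q x" for n
  proof -
    have "n \<le> multiplicity (int q) (int x) \<longleftrightarrow> int q ^ n dvd int x"
      using power_dvd_iff_le_multiplicity[OF x2 u2, of n] by simp
    also have "\<dots> \<longleftrightarrow> q ^ n dvd x" by (rule iff)
    also have "\<dots> \<longleftrightarrow> n \<le> multiplicity q x"
      using power_dvd_iff_le_multiplicity[OF False u1, of n] by simp
    finally show ?thesis .
  qed
  have "multiplicity (int q) (int x) \<le> multiplicity q x" using h by blast
  moreover have "multiplicity q x \<le> multiplicity (int q) (int x)" using h by blast
  ultimately show ?thesis by (rule antisym)
qed


lemma cyclo_mult:
  fixes p q :: nat
  assumes q: "prime q" and p: "prime p" and pq: "p \<noteq> q"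
  shows "multiplicity (int q) (cyclotomic_val (ord q p) (int p)) = multiplicity q (p ^ ord q p - 1)"
proof -
  define w where "w = ord q p"
  have "coprime q p" using p q pq by (simp add: primes_coprime)
  then have w: "w > 0" unfolding w_def by simp
  define D where "D = {d. d dvd w} - {w}"
  have fin: "finite {d. d dvd w}" using w by simp
  have eq: "int p ^ w - 1 = cyclotomic_val w (int p) * (\<Prod>d\<in>D. cyclotomic_val d (int p))"
  proof -
    have "int p ^ w - 1 = (\<Prod>d\<in>{d. d dvd w}. cyclotomic_val d (int p))" by (rule xm1_int[OF w])
    also have "\<dots> = cyclotomic_val w (int p) * (\<Prod>d\<in>{d. d dvd w} - {w}. cyclotomic_val d (int p))"
      by (rule prod.remove) (use fin in auto)
    finally show ?thesis unfolding D_def .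
  qed
  have pq': "prime (int q)" using q by simp
  have nd: "\<not> int q dvd (\<Prod>d\<in>D. cyclotomic_val d (int p))"
  proof
    assume "int q dvd (\<Prod>d\<in>D. cyclotomic_val d (int p))"
    moreover have "finite D" using fin unfolding D_def by simp
    ultimately have "\<exists>d\<in>D. int q dvd cyclotomic_val d (int p)"
      using prime_dvd_prod_iff[where f="\<lambda>d. cyclotomic_val d (int p)" and A=D and p="int q"] pq' by simp
    then obtain d where d: "d \<in> D" "int q dvd cyclotomic_val d (int p)" by blast
    have dw: "d dvd w" "d \<noteq> w" using d(1) unfolding D_def by auto
    have "d \<le> w" using dw(1) w by (rule dvd_imp_le)
    then have d0: "0 < d" "d < w" using dw w by (auto intro: Nat.gr0I)
    have "cyclotomic_val d (int p) dvd (\<Prod>e\<in>{e. e dvd d}. cyclotomic_val e (int p))"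
      using d0 by (intro dvd_prodI) auto
    then have "cyclotomic_val d (int p) dvd int p ^ d - 1" using xm1_int[OF d0(1), of "int p"] by simp
    then have "int q dvd int p ^ d - 1" using d(2) by (rule dvd_trans[rotated])
    then have "[int p ^ d = int 1] (mod int q)" by (simp add: cong_iff_dvd_diff)
    then have "[int (p ^ d) = int 1] (mod int q)" by simp
    then have "[p ^ d = 1] (mod q)" by (simp only: cong_int_iff)
    then show False using ord_minimal[OF d0[unfolded w_def]] by blast
  qed
  have p2: "p \<ge> 2" using p by (simp add: prime_ge_2_nat)
  have "p \<le> p ^ w" using p2 w by (intro self_le_power) auto
  then have pw: "p ^ w \<ge> 2" using p2 by linarith
  then have "int (p ^ w) \<ge> 2" by linarith
  then have "int p ^ w \<ge> 2" by simp
  then have ne: "int p ^ w - 1 \<noteq> 0" by simp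
  have "multiplicity (int q) (int p ^ w - 1) = multiplicity (int q) (cyclotomic_val w (int p)) + multiplicity (int q) (\<Prod>d\<in>D. cyclotomic_val d (int p))"
    unfolding eq using ne eq pq' by (intro prime_elem_multiplicity_mult_distrib) (auto simp del: mult_eq_0_iff)
  also have "multiplicity (int q) (\<Prod>d\<in>D. cyclotomic_val d (int p)) = 0"
    using nd by (rule not_dvd_imp_multiplicity_0)
  also have "int p ^ w - 1 = int (p ^ w - 1)" using pw by (simp add: of_nat_diff)
  finally show ?thesis using mult_int_nat[OF q] unfolding w_def by simp
qed


lemma sigma_pos:
  fixes m :: nat assumes "m > 0" shows "sigma k m > 0"
proof -
  have fin: "finite {d. d dvd m}" using assms by simp
  have "(1::nat) \<in> {d. d dvd m}" by simp
  then have "1 ^ k \<le> (\<Sum>d\<in>{d. d dvd m}. d ^ k)"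
    using fin by (intro member_le_sum) auto
  then show ?thesis unfolding sigma_def by simp
qed

lemma local_val:
  fixes p q k \<alpha> :: nat
  assumes q: "prime q" "q \<ge> 3" and p: "prime p" and k: "k \<ge> 1"
  shows "multiplicity q (sigma k (p ^ \<alpha>)) =
    (if [p ^ k = 1] (mod q) then multiplicity q (\<alpha> + 1) else 0) +
    (if p \<noteq> q \<and> \<not> [p ^ k = 1] (mod q) \<and> ord q (p ^ k) dvd \<alpha> + 1
       then multiplicity q (\<alpha> + 1) + multiplicity q k
            + multiplicity (int q) (cyclotomic_val (ord q p) (int p)) else 0)"
proof -
  define a where "a = p ^ k"
  have p2: "p \<ge> 2" using p by (simp add: prime_ge_2_nat)
  have "p \<le> a" unfolding a_def using p2 k by (intro self_le_power) auto
  then have a2: "a \<ge> 2" using p2 by linarith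
  define S where "S = (\<Sum>i<Suc \<alpha>. a ^ i)"
  have sig: "sigma k (p ^ \<alpha>) = S" unfolding S_def a_def by (rule sigma_prime_power[OF p])
  have eqS: "a ^ Suc \<alpha> - 1 = (a - 1) * S" unfolding S_def using a2 by (intro nat_pow_diff_1) auto
  have S1: "S = 1 + a * (\<Sum>i<\<alpha>. a ^ i)"
  proof -
    have "S = a ^ 0 + (\<Sum>i<\<alpha>. a ^ Suc i)" unfolding S_def by (rule sum.lessThan_Suc_shift)
    also have "\<dots> = 1 + a * (\<Sum>i<\<alpha>. a ^ i)" by (simp only: power_0 power_Suc sum_distrib_left)
    finally show ?thesis .
  qed
  then have S0: "S \<noteq> 0" by simp
  have a10: "a - 1 \<noteq> 0" using a2 by simp
  have qodd: "odd q" using q by (intro prime_odd_nat) auto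
  have qe: "prime_elem q" using q by simp
  have mS: "multiplicity q (a ^ Suc \<alpha> - 1) = multiplicity q (a - 1) + multiplicity q S"
    unfolding eqS by (rule prime_elem_multiplicity_mult_distrib[OF qe a10 S0])
  consider (c1) "[a = 1] (mod q)" | (c2) "\<not> [a = 1] (mod q)" "p = q" | (c3) "\<not> [a = 1] (mod q)" "p \<noteq> q"
    by blast
  then show ?thesis
  proof cases
    case c1
    have "multiplicity q (a ^ Suc \<alpha> - 1) = multiplicity q (a - 1) + multiplicity q (Suc \<alpha>)"
      using a2 c1 by (intro lte[OF q(1) qodd]) auto
    then have "multiplicity q S = multiplicity q (Suc \<alpha>)" using mS by simp
    then show ?thesis using c1 sig unfolding a_def by simp
  next
    case c2
    have "q dvd a" unfolding a_def using c2 k by (simp add: dvd_power)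
    have "\<not> q dvd S"
    proof
      assume "q dvd S"
      moreover have "q dvd a * (\<Sum>i<\<alpha>. a ^ i)" using \<open>q dvd a\<close> by simp
      ultimately have "q dvd 1" using S1 dvd_add_left_iff[of q "a * (\<Sum>i<\<alpha>. a ^ i)" 1] by simp
      then show False using q by simp
    qed
    then have "multiplicity q S = 0" by (rule not_dvd_imp_multiplicity_0)
    then show ?thesis using c2 sig unfolding a_def by simp
  next
    case c3
    have "\<not> q dvd a - 1" using c3(1) cong_altdef_nat[of 1 a q] a2 by (simp add: cong_sym_eq)
    then have "multiplicity q (a - 1) = 0" by (rule not_dvd_imp_multiplicity_0)
    then have mS': "multiplicity q S = multiplicity q (a ^ Suc \<alpha> - 1)" using mS by simp
    have aSa: "a ^ Suc \<alpha> \<ge> 1" using a2 by simp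
    show ?thesis
    proof (cases "ord q a dvd Suc \<alpha>")
      case False
      then have "\<not> [a ^ Suc \<alpha> = 1] (mod q)" using ord_divides[of a "Suc \<alpha>" q] by blast
      then have "\<not> q dvd a ^ Suc \<alpha> - 1" using cong_altdef_nat[of 1 "a ^ Suc \<alpha>" q] aSa by (simp add: cong_sym_eq)
      then have "multiplicity q S = 0" using mS' by (simp add: not_dvd_imp_multiplicity_0)
      then show ?thesis using c3 sig False unfolding a_def by simp
    next
      case True
      define w where "w = ord q p"
      have "coprime q p" using p q c3 by (simp add: primes_coprime)
      then have w0: "w > 0" unfolding w_def by simp
      define b where "b = p ^ w"
      have bc: "[b = 1] (mod q)" unfolding b_def w_def by (rule ord)
      have "p \<le> b" unfolding b_def using p2 w0 by (intro self_le_power) auto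
      then have b1: "b > 1" using p2 by linarith
      have "[a ^ Suc \<alpha> = 1] (mod q)" using True ord_divides[of a "Suc \<alpha>" q] by blast
      moreover have "a ^ Suc \<alpha> = p ^ (k * Suc \<alpha>)" unfolding a_def by (simp only: power_mult)
      ultimately have "[p ^ (k * Suc \<alpha>) = 1] (mod q)" by simp
      then have "w dvd k * Suc \<alpha>" unfolding w_def using ord_divides[of p "k * Suc \<alpha>" q] by blast
      then obtain t where t: "k * Suc \<alpha> = w * t" by blast
      have t0: "t > 0" using t k by (auto intro: Nat.gr0I)
      have abt: "a ^ Suc \<alpha> = b ^ t" unfolding a_def b_def by (simp only: power_mult[symmetric] t)
      have l: "multiplicity q (b ^ t - 1) = multiplicity q (b - 1) + multiplicity q t"
        by (rule lte[OF q(1) qodd b1 bc t0])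
      have mk: "multiplicity q (k * Suc \<alpha>) = multiplicity q k + multiplicity q (Suc \<alpha>)"
        using k qe by (intro prime_elem_multiplicity_mult_distrib) auto
      have "\<not> q dvd p"
      proof
        assume "q dvd p"
        then have "q = 1 \<or> q = p" using p by (simp add: prime_nat_iff)
        then show False using q c3 by auto
      qed
      then have "[p ^ (q - 1) = 1] (mod q)" by (rule fermat_theorem[OF q(1)])
      then have "w dvd q - 1" unfolding w_def using ord_divides[of p "q - 1" q] by blast
      then have "w \<le> q - 1" using q by (intro dvd_imp_le) auto
      then have "\<not> q dvd w" using w0 q by (auto dest: dvd_imp_le)
      then have mw: "multiplicity q w = 0" by (rule not_dvd_imp_multiplicity_0)
      have mwt: "multiplicity q (w * t) = multiplicity q w + multiplicity q t"
        using w0 t0 qe by (intro prime_elem_multiplicity_mult_distrib) auto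
      have cm: "multiplicity (int q) (cyclotomic_val (ord q p) (int p)) = multiplicity q (b - 1)"
        unfolding b_def w_def by (rule cyclo_mult[OF q(1) p c3(2)])
      have "multiplicity q S = multiplicity q (b - 1) + multiplicity q k + multiplicity q (Suc \<alpha>)"
        using mS' abt l mk mwt mw t by simp
      then show ?thesis using c3 sig True cm unfolding a_def by simp
    qed
  qed
qed

theorem theorem1:
  fixes n k q :: nat
  assumes "n \<ge> 2" and "k \<ge> 1" and "prime q" and "q \<ge> 3"
  shows "multiplicity q (sigma k n) =
    (\<Sum>p\<in>{p\<in>prime_factors n. [p ^ k = 1] (mod q)}. multiplicity q (multiplicity p n + 1))
    + (\<Sum>p\<in>{p\<in>prime_factors n. p \<noteq> q \<and> \<not> [p ^ k = 1] (mod q)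
                 \<and> ord q (p ^ k) dvd multiplicity p n + 1}.
         multiplicity q (multiplicity p n + 1) + multiplicity q k
         + multiplicity (int q) (cyclotomic_val (ord q p) (int p)))"
proof -
  have n0: "n > 0" using assms by simp
  define P where "P = prime_factors n"
  have finP: "finite P" unfolding P_def by simp
  have primeP: "prime p" if "p \<in> P" for p using that unfolding P_def by auto
  have qe: "prime_elem q" using assms by simp
  have "multiplicity q (sigma k n) = multiplicity q (\<Prod>p\<in>P. sigma k (p ^ multiplicity p n))"
    unfolding P_def using sigma_factor[OF n0] by simp
  also have "\<dots> = (\<Sum>p\<in>P. multiplicity q (sigma k (p ^ multiplicity p n)))"
  proof (rule prime_elem_multiplicity_prod_distrib[OF qe _ finP])
    show "0 \<notin> (\<lambda>p. sigma k (p ^ multiplicity p n)) ` P"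
      using sigma_pos primeP prime_gt_0_nat by (metis (no_types, lifting) image_iff less_irrefl zero_less_power)
  qed
  also have "\<dots> = (\<Sum>p\<in>P. (if [p ^ k = 1] (mod q) then multiplicity q (multiplicity p n + 1) else 0) +
    (if p \<noteq> q \<and> \<not> [p ^ k = 1] (mod q) \<and> ord q (p ^ k) dvd multiplicity p n + 1
       then multiplicity q (multiplicity p n + 1) + multiplicity q k
            + multiplicity (int q) (cyclotomic_val (ord q p) (int p)) else 0))"
    using local_val[OF assms(3,4) primeP assms(2)] by (intro sum.cong) auto
  also have "\<dots> = (\<Sum>p\<in>P. (if [p ^ k = 1] (mod q) then multiplicity q (multiplicity p n + 1) else 0)) +
    (\<Sum>p\<in>P. (if p \<noteq> q \<and> \<not> [p ^ k = 1] (mod q) \<and> ord q (p ^ k) dvd multiplicity p n + 1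
       then multiplicity q (multiplicity p n + 1) + multiplicity q k
            + multiplicity (int q) (cyclotomic_val (ord q p) (int p)) else 0))"
    by (rule sum.distrib)
  also have "\<dots> = (\<Sum>p\<in>{p\<in>P. [p ^ k = 1] (mod q)}. multiplicity q (multiplicity p n + 1))
    + (\<Sum>p\<in>{p\<in>P. p \<noteq> q \<and> \<not> [p ^ k = 1] (mod q)
                 \<and> ord q (p ^ k) dvd multiplicity p n + 1}.
         multiplicity q (multiplicity p n + 1) + multiplicity q k
         + multiplicity (int q) (cyclotomic_val (ord q p) (int p)))"
    by (simp only: sum.inter_filter[OF finP])
  finally show ?thesis unfolding P_def .
qed


end
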